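(* Let $E\in(-2,2)$, $k=\arccos(-E/2)\in(0,\pi)$, let $w_\sigma$ be a compactly supported real random variable on a probability space $(\Sigma,\mathbb P)$, and let $$T^{\epsilon,\delta}_\sigma=\begin{pmatrix}e^{-\imath k}&0\\0&e^{\imath k}\end{pmatrix}\exp\Big[\frac{\imath\delta+\epsilon w_\sigma}{2\sin(k)}(B_2+B_3)\Big],\qquad \epsilon,\delta\in\mathbb R.$$ If $\delta\ne0$, or if $\epsilon\ne0$ and the support of $w_\sigma$ contains more than one point, then the semigroup generated by $\mathrm{supp}(T^{\epsilon,\delta}_\sigma)$ is not relatively compact.
   Context: $B_2=\begin{pmatrix}0&\imath\\-\imath&0\end{pmatrix}$, $B_3=\begin{pmatrix}\imath&0\\0&-\imath\end{pmatrix}$. $\mathrm{supp}(T^{\epsilon,\delta}_\sigma)\subset\mathrm{SL}(2,\mathbb C)$ is the support of the distribution of the random matrix; relative compactness refers to the topology of $\mathbb C^{2\times 2}$. *)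

theory Defs
  imports "HOL-Analysis.Analysis" "HOL-Probability.Probability"
begin

type_synonym cmat2 = "complex^2^2"

definition mat2 :: "complex \<Rightarrow> complex \<Rightarrow> complex \<Rightarrow> complex \<Rightarrow> cmat2" where
  "mat2 a b c d = (\<chi> i j. if i = 1 then (if j = 1 then a else b) else (if j = 1 then c else d))"

fun mpow :: "cmat2 \<Rightarrow> nat \<Rightarrow> cmat2" where
  "mpow A 0 = mat 1"
| "mpow A (Suc n) = A ** mpow A n"

definition mexp :: "cmat2 \<Rightarrow> cmat2" where
  "mexp A = (\<Sum>n. (1 / fact n) *\<^sub>R mpow A n)"

definition B2 :: cmat2 where "B2 = mat2 0 \<i> (- \<i>) 0"
definition B3 :: cmat2 where "B3 = mat2 \<i> 0 0 (- \<i>)"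

definition msmult :: "complex \<Rightarrow> cmat2 \<Rightarrow> cmat2" where
  "msmult c A = (\<chi> i j. c * A $ i $ j)"

text \<open>The transfer matrix as a function of the value x of the random variable.\<close>
definition Tmat :: "real \<Rightarrow> real \<Rightarrow> real \<Rightarrow> real \<Rightarrow> cmat2" where
  "Tmat E \<epsilon> \<delta> x = (let k = arccos (- E / 2) in
     mat2 (exp (- \<i> * of_real k)) 0 0 (exp (\<i> * of_real k)) **
     mexp (msmult ((\<i> * of_real \<delta> + of_real (\<epsilon> * x)) / of_real (2 * sin k)) (B2 + B3)))"

definition meas_support :: "'a::topological_space measure \<Rightarrow> 'a set" where
  "meas_support N = {x. \<forall>U. open U \<and> x \<in> U \<longrightarrow> emeasure N U > 0}"

inductive_set semigroup_gen :: "cmat2 set \<Rightarrow> cmat2 set" for S where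
  base: "x \<in> S \<Longrightarrow> x \<in> semigroup_gen S"
| mult: "x \<in> semigroup_gen S \<Longrightarrow> y \<in> semigroup_gen S \<Longrightarrow> x ** y \<in> semigroup_gen S"

end

theory Submission
  imports Defs
begin

lemma two_ne_one2: "(2::2) \<noteq> 1" by simp

lemma mat2_nth [simp]:
  "mat2 a b c d $ 1 $ 1 = a" "mat2 a b c d $ 1 $ 2 = b"
  "mat2 a b c d $ 2 $ 1 = c" "mat2 a b c d $ 2 $ 2 = d"
  by (simp_all add: mat2_def)

lemma mat2_eta: "X = mat2 (X$1$1) (X$1$2) (X$2$1) (X$2$2)"
  unfolding mat2_def by (simp add: vec_eq_iff forall_2)

lemma mat2_eq_iff: "mat2 a b c d = mat2 a' b' c' d' \<longleftrightarrow> a = a' \<and> b = b' \<and> c = c' \<and> d = d'"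
  by (metis mat2_nth)

lemma mat2_mult: "mat2 a b c d ** mat2 a' b' c' d' =
   mat2 (a*a' + b*c') (a*b' + b*d') (c*a' + d*c') (c*b' + d*d')"
  by (simp add: vec_eq_iff forall_2 mat2_def matrix_matrix_mult_def UNIV_2)

lemma mat2_one: "mat 1 = mat2 1 0 0 1"
  by (simp add: vec_eq_iff forall_2 mat2_def mat_def)

lemma mat2_zero: "0 = mat2 0 0 0 0"
  by (simp add: vec_eq_iff forall_2 mat2_def)

lemma mat2_add: "mat2 a b c d + mat2 a' b' c' d' = mat2 (a+a') (b+b') (c+c') (d+d')"
  by (simp add: vec_eq_iff forall_2 mat2_def)

lemma mat2_scaleR: "r *\<^sub>R mat2 a b c d = mat2 (r*\<^sub>Ra) (r*\<^sub>Rb) (r*\<^sub>Rc) (r*\<^sub>Rd)"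
  by (simp add: vec_eq_iff forall_2 mat2_def)

lemma msmult_mat2: "msmult r (mat2 a b c d) = mat2 (r*a) (r*b) (r*c) (r*d)"
  by (simp add: vec_eq_iff forall_2 mat2_def msmult_def)

lemma mexp_nil:
  "mexp (msmult c (B2 + B3)) = mat2 (1 + \<i>*c) (\<i>*c) (-\<i>*c) (1 - \<i>*c)"
proof -
  define X where "X = msmult c (B2 + B3)"
  have X: "X = mat2 (\<i>*c) (\<i>*c) (-\<i>*c) (-\<i>*c)"
    unfolding X_def B2_def B3_def by (simp add: mat2_add msmult_mat2 mult.commute)
  have XX: "X ** X = 0" unfolding X mat2_mult mat2_zero
    by (simp add: algebra_simps power2_eq_square[symmetric])
  have z: "mpow X n = 0" if "n \<notin> {0,1}" for n
  proof -
    define m where "m = n - 2"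
    have "n = Suc (Suc m)" using that by (auto simp: m_def)
    then show ?thesis using XX by (simp add: matrix_mul_assoc)
  qed
  have "mexp X = (\<Sum>n\<in>{0,1}. (1 / fact n) *\<^sub>R mpow X n)"
    unfolding mexp_def by (rule suminf_finite) (auto simp: z)
  also have "\<dots> = mat 1 + X" by simp
  finally show ?thesis unfolding X_def[symmetric] X mat2_one mat2_add by simp
qed

definition tr2 :: "cmat2 \<Rightarrow> complex" where "tr2 X = X$1$1 + X$2$2"
definition det2 :: "cmat2 \<Rightarrow> complex" where "det2 X = X$1$1 * X$2$2 - X$1$2 * X$2$1"
definition adj2 :: "cmat2 \<Rightarrow> cmat2" where "adj2 X = mat2 (X$2$2) (- X$1$2) (- X$2$1) (X$1$1)"

definition tk :: "real \<Rightarrow> real" where "tk E = arccos (- E / 2)"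
definition tc :: "real \<Rightarrow> real \<Rightarrow> real \<Rightarrow> real \<Rightarrow> complex" where
  "tc E \<epsilon> \<delta> x = (\<i> * of_real \<delta> + of_real (\<epsilon> * x)) / of_real (2 * sin (tk E))"

lemma Tmat_eq: "Tmat E \<epsilon> \<delta> x =
  mat2 (exp (- \<i> * of_real (tk E)) * (1 + \<i> * tc E \<epsilon> \<delta> x))
       (exp (- \<i> * of_real (tk E)) * (\<i> * tc E \<epsilon> \<delta> x))
       (exp (\<i> * of_real (tk E)) * (- \<i> * tc E \<epsilon> \<delta> x))
       (exp (\<i> * of_real (tk E)) * (1 - \<i> * tc E \<epsilon> \<delta> x))"
  unfolding Tmat_def Let_def tk_def[symmetric] tc_def[symmetric] mexp_nil mat2_mult by simp

lemma pq: "exp (- \<i> * of_real k) * exp (\<i> * of_real k) = 1"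
  by (simp add: exp_add[symmetric])

lemma det2_Tmat: "det2 (Tmat E \<epsilon> \<delta> x) = 1"
proof -
  have h: "p * q = 1 \<Longrightarrow> p * (1 + \<i> * c) * (q * (1 - \<i> * c)) - p * (\<i> * c) * (q * (- \<i> * c)) = 1"
    for p q c :: complex
  proof -
    assume "p * q = 1"
    have "p * (1 + \<i> * c) * (q * (1 - \<i> * c)) - p * (\<i> * c) * (q * (- \<i> * c))
        = (p * q) * (1 - (\<i> * \<i>) * c * c + (\<i> * \<i>) * c * c)" by (simp add: algebra_simps)
    also have "\<dots> = 1" using \<open>p * q = 1\<close> by simp
    finally show ?thesis .
  qed
  show ?thesis unfolding Tmat_eq det2_def by (simp only: mat2_nth, rule h, rule pq)
qed

lemma sin_tk: assumes "-2 < E" "E < 2" shows "sin (tk E) > 0" "cos (tk E) = - E / 2"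
proof -
  have "0 < tk E \<and> tk E < pi" unfolding tk_def using assms by (intro arccos_lt_bounded) auto
  then show "sin (tk E) > 0" by (intro sin_gt_zero) auto
  show "cos (tk E) = - E / 2" unfolding tk_def using assms by (intro cos_arccos) auto
qed

lemma tr2_Tmat: assumes "-2 < E" "E < 2"
  shows "tr2 (Tmat E \<epsilon> \<delta> x) = of_real (- E + \<epsilon> * x) + \<i> * of_real \<delta>"
proof -
  define k where "k = tk E"
  have s: "sin k > 0" and co: "cos k = - E / 2" using sin_tk[OF assms] by (auto simp: k_def)
  have p: "exp (- \<i> * of_real k) = of_real (cos k) - \<i> * of_real (sin k)"
    by (simp add: complex_eq_iff exp_minus Re_exp Im_exp cos_minus sin_minus)
  have q: "exp (\<i> * of_real k) = of_real (cos k) + \<i> * of_real (sin k)"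
    by (simp add: complex_eq_iff Re_exp Im_exp)
  define z where "z = \<i> * of_real \<delta> + of_real (\<epsilon> * x)"
  have c: "tc E \<epsilon> \<delta> x = z / of_real (2 * sin k)" unfolding tc_def z_def k_def ..
  have sne: "(of_real (2 * sin k) :: complex) \<noteq> 0" using s by simp
  have "tr2 (Tmat E \<epsilon> \<delta> x) = (of_real (cos k) - \<i> * of_real (sin k)) * (1 + \<i> * (z / of_real (2 * sin k)))
     + (of_real (cos k) + \<i> * of_real (sin k)) * (1 - \<i> * (z / of_real (2 * sin k)))"
    unfolding tr2_def Tmat_eq k_def[symmetric] p q c by simp
  also have "\<dots> = 2 * of_real (cos k) + z"
    using sne by (simp add: field_simps)
  finally show ?thesis unfolding co z_def by simp
qed

lemma continuous_on_mat2:
  assumes "continuous_on S f" "continuous_on S g" "continuous_on S h" "continuous_on S l"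
  shows "continuous_on S (\<lambda>x. mat2 (f x) (g x) (h x) (l x))"
  unfolding mat2_def
proof (intro continuous_on_vec_lambda)
  fix i j :: 2
  show "continuous_on S (\<lambda>x. if i = 1 then if j = 1 then f x else g x else if j = 1 then h x else l x)"
    by (cases "i = 1"; cases "j = 1") (simp_all add: assms)
qed

lemma tendsto_mat2:
  assumes "(f \<longlongrightarrow> a) F" "(g \<longlongrightarrow> b) F" "(h \<longlongrightarrow> c) F" "(l \<longlongrightarrow> d) F"
  shows "((\<lambda>x. mat2 (f x) (g x) (h x) (l x)) \<longlongrightarrow> mat2 a b c d) F"
  unfolding mat2_def
  by (intro tendsto_vec_lambda) (auto simp: assms)

lemma continuous_Tmat: "continuous_on UNIV (Tmat E \<epsilon> \<delta>)"
  unfolding Tmat_eq[abs_def] tc_def divide_inverse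
  by (intro continuous_on_mat2 continuous_intros)

lemma ex_mat2: obtains a b c d where "X = mat2 a b c d"
  using mat2_eta by blast

lemma mpow_add: "mpow A (m + n) = mpow A m ** mpow A n"
  by (induction m) (simp_all add: matrix_mul_assoc)

lemma det2_mult: "det2 (X ** Y) = det2 X * det2 Y"
proof -
  obtain a b c d where X: "X = mat2 a b c d" by (rule ex_mat2)
  obtain a' b' c' d' where Y: "Y = mat2 a' b' c' d'" by (rule ex_mat2)
  show ?thesis unfolding X Y mat2_mult det2_def by (simp add: algebra_simps)
qed

lemma mult_adj2: "det2 X = 1 \<Longrightarrow> X ** adj2 X = mat 1"
proof -
  assume h: "det2 X = 1"
  obtain a b c d where X: "X = mat2 a b c d" by (rule ex_mat2)
  show ?thesis using h unfolding X mat2_mult det2_def adj2_def mat2_one by (simp add: algebra_simps)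
qed

lemma det2_one: "det2 (mat 1) = 1" by (simp add: mat2_one det2_def)

lemma det2_mpow: "det2 A = 1 \<Longrightarrow> det2 (mpow A n) = 1"
  by (induction n) (simp_all add: det2_mult det2_one)

lemma mpow_add_adj: "det2 A = 1 \<Longrightarrow> mpow A (m + n) ** adj2 (mpow A n) = mpow A m"
  by (simp add: mpow_add matrix_mul_assoc[symmetric] mult_adj2 det2_mpow)

lemma tendsto_mmult:
  fixes f g :: "'b \<Rightarrow> cmat2"
  assumes "(f \<longlongrightarrow> X) F" "(g \<longlongrightarrow> Y) F"
  shows "((\<lambda>j. f j ** g j) \<longlongrightarrow> X ** Y) F"
  unfolding matrix_matrix_mult_def by (intro tendsto_intros assms)

lemma tendsto_adj2:
  fixes f :: "'b \<Rightarrow> cmat2"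
  assumes "(f \<longlongrightarrow> X) F"
  shows "((\<lambda>j. adj2 (f j)) \<longlongrightarrow> adj2 X) F"
  unfolding adj2_def by (intro tendsto_mat2 tendsto_intros assms)

lemma tendsto_det2:
  fixes f :: "'b \<Rightarrow> cmat2"
  assumes "(f \<longlongrightarrow> X) F"
  shows "((\<lambda>j. det2 (f j)) \<longlongrightarrow> det2 X) F"
  unfolding det2_def by (intro tendsto_intros assms)

lemma tendsto_mpow:
  fixes f :: "'b \<Rightarrow> cmat2"
  assumes "(f \<longlongrightarrow> X) F"
  shows "((\<lambda>j. mpow (f j) n) \<longlongrightarrow> mpow X n) F"
  by (induction n) (simp_all add: tendsto_mmult assms)

lemma norm_entry: "norm (X $ i $ j) \<le> norm (X :: cmat2)"
  using Finite_Cartesian_Product.norm_nth_le[where x="X$i" and i=j] Finite_Cartesian_Product.norm_nth_le[where x=X and i=i] by linarith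

lemma tr2_rec: "det2 A = 1 \<Longrightarrow> tr2 (A ** (A ** X)) = tr2 A * tr2 (A ** X) - tr2 X"
proof -
  assume h: "det2 A = 1"
  obtain a b c d where A: "A = mat2 a b c d" by (rule ex_mat2)
  obtain a' b' c' d' where Y: "X = mat2 a' b' c' d'" by (rule ex_mat2)
  have h': "a * d - b * c = 1" using h by (simp add: A det2_def)
  have "tr2 A * tr2 (A ** X) - tr2 X - tr2 (A ** (A ** X)) = (a * d - b * c - 1) * (a' + d')"
    unfolding A Y mat2_mult tr2_def by (simp add: algebra_simps)
  then show ?thesis using h' by simp
qed

lemma mpow_in_sg: "A \<in> S \<Longrightarrow> mpow A (Suc n) \<in> semigroup_gen S"
proof (induction n)
  case 0 then show ?case using semigroup_gen.base by simp
next
  case (Suc n) then show ?case using semigroup_gen.mult[OF semigroup_gen.base] by simp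
qed

lemma mpow_in_sg': "A \<in> semigroup_gen S \<Longrightarrow> mpow A (Suc n) \<in> semigroup_gen S"
proof (induction n)
  case 0 then show ?case by simp
next
  case (Suc n) then show ?case using semigroup_gen.mult by simp
qed

lemma tr2_bound: "norm (tr2 X) \<le> 2 * norm X"
  unfolding tr2_def using norm_entry[of X 1 1] norm_entry[of X 2 2] norm_triangle_ineq[of "X$1$1" "X$2$2"]
  by linarith

lemma pow_unbounded:
  fixes \<nu> \<nu>' :: complex
  assumes "\<nu> * \<nu>' = 1" "norm \<nu> > 1" "\<And>n. norm (\<nu> ^ Suc n + \<nu>' ^ Suc n) \<le> C"
  shows False
proof -
  have nn: "norm \<nu>' = 1 / norm \<nu>" using assms(1,2)
    by (metis mult.commute nonzero_eq_divide_eq norm_mult norm_one not_one_less_zero norm_zero)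
  have "norm \<nu> ^ Suc n \<le> C + 1" for n
  proof -
    have "norm \<nu>' \<le> 1" using nn assms(2) by (simp add: divide_le_eq)
    then have "norm \<nu>' ^ Suc n \<le> 1" by (rule power_le_one[OF norm_ge_zero])
    then have "norm (\<nu>' ^ Suc n) \<le> 1" by (simp only: norm_power)
    moreover have "norm (\<nu> ^ Suc n) - norm (\<nu>' ^ Suc n) \<le> norm (\<nu> ^ Suc n + \<nu>' ^ Suc n)"
      by (metis norm_diff_ineq diff_minus_eq_add norm_minus_cancel)
    moreover have "norm (\<nu> ^ Suc n) = norm \<nu> ^ Suc n" by (rule norm_power)
    ultimately show ?thesis using assms(3)[of n] by linarith
  qed
  moreover obtain n where "C + 1 < norm \<nu> ^ n" using real_arch_pow[OF assms(2)] by blast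
  moreover have "norm \<nu> ^ n \<le> norm \<nu> ^ Suc n" using assms(2) by (intro power_increasing) auto
  ultimately show False by (meson not_le order_trans)
qed

lemma nonreal_unbounded:
  assumes det: "det2 A = 1" and im: "Im (tr2 A) \<noteq> 0" and bd: "\<And>n. norm (mpow A (Suc n)) \<le> Bd"
  shows False
proof -
  define t where "t = tr2 A"
  define s where "s n = tr2 (mpow A n)" for n
  have srec: "s (Suc (Suc n)) = t * s (Suc n) - s n" for n
    unfolding s_def t_def using tr2_rec[OF det, of "mpow A n"] by simp
  define la where "la = (t + csqrt (t^2 - 4)) / 2"
  define mu where "mu = (t - csqrt (t^2 - 4)) / 2"
  have sum: "la + mu = t" unfolding la_def mu_def by (simp add: field_simps)
  have prod: "la * mu = 1" unfolding la_def mu_def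
    by (simp add: field_simps power2_eq_square[symmetric])
  have s0: "s 0 = 2" by (simp add: s_def tr2_def mat2_one)
  have s1: "s 1 = t" by (simp add: s_def t_def)
  have sform: "s n = la ^ n + mu ^ n \<and> s (Suc n) = la ^ Suc n + mu ^ Suc n" for n
  proof (induction n)
    case 0 then show ?case using s0 s1 sum by simp
  next
    case (Suc n)
    have "s (Suc (Suc n)) = (la + mu) * (la ^ Suc n + mu ^ Suc n) - (la * mu) * (la ^ n + mu ^ n)"
      using Suc srec sum prod by simp
    also have "\<dots> = la ^ Suc (Suc n) + mu ^ Suc (Suc n)" by (simp add: algebra_simps)
    finally show ?case using Suc by simp
  qed
  have sb: "norm (s (Suc n)) \<le> 2 * Bd" for n
    unfolding s_def using tr2_bound[of "mpow A (Suc n)"] bd[of n] by linarith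
  have "norm la \<noteq> 1"
  proof
    assume h: "norm la = 1"
    have "la * cnj la = 1" using complex_norm_square[of la] h by simp
    then have "mu = cnj la" using prod
      by (metis mult.left_commute mult.right_neutral mult.commute)
    then have "Im t = 0" using sum by auto
    then show False using im t_def by simp
  qed
  then consider "norm la > 1" | "norm la < 1" by linarith
  then show False
  proof cases
    case 1
    show False by (rule pow_unbounded[OF prod 1, of "2 * Bd"]) (metis sb sform)
  next
    case 2
    have "la \<noteq> 0" using prod by auto
    then have "norm mu = 1 / norm la" using prod
      by (metis eq_divide_eq norm_mult norm_one norm_eq_zero mult.commute)
    moreover have "norm la > 0" using \<open>la \<noteq> 0\<close> by simp
    moreover have "1 < 1 / norm la" using 2 \<open>norm la > 0\<close> by (simp add: less_divide_eq)
    ultimately have "norm mu > 1" by simp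
    show False by (rule pow_unbounded[OF _ \<open>norm mu > 1\<close>, of la "2 * Bd"])
      (use prod sb sform in \<open>auto simp: mult.commute add.commute\<close>)
  qed
qed

lemma compact_power_inverse:
  assumes cpt: "compact (closure (semigroup_gen S))"
    and bd: "\<And>X. X \<in> semigroup_gen S \<Longrightarrow> norm X \<le> Bd"
    and A: "A \<in> semigroup_gen S" and B: "B \<in> semigroup_gen S" and detB: "det2 B = 1"
  shows "norm (mpow (A ** adj2 B) (Suc n)) \<le> Bd"
proof -
  let ?G = "semigroup_gen S"
  define f where "f m = mpow B (Suc m)" for m
  have fG: "f m \<in> closure ?G" for m using mpow_in_sg'[OF B] closure_subset unfolding f_def by blast
  obtain l r where l: "l \<in> closure ?G" and r: "strict_mono r" and lim: "(f \<circ> r) \<longlonglongrightarrow> l"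
    using seq_compactE[OF compact_imp_seq_compact[OF cpt], of f] fG by blast
  have "(\<lambda>j. det2 ((f \<circ> r) j)) \<longlonglongrightarrow> det2 l" by (rule tendsto_det2[OF lim])
  moreover have "det2 ((f \<circ> r) j) = 1" for j unfolding f_def o_def by (rule det2_mpow[OF detB])
  ultimately have "(\<lambda>j. 1) \<longlonglongrightarrow> det2 l" by simp
  then have detl: "det2 l = 1" by (simp add: LIMSEQ_const_iff)
  define e where "e j = r (Suc j) - r j" for j
  have rlt: "r j < r (Suc j)" for j using strict_monoD[OF r, of j "Suc j"] by simp
  have e1: "e j \<ge> 1" for j using rlt[of j] unfolding e_def by arith
  have he: "mpow B (e j) = f (r (Suc j)) ** adj2 (f (r j))" for j
  proof -
    have "Suc (r (Suc j)) = e j + Suc (r j)" using rlt[of j] unfolding e_def by arith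
    then show ?thesis unfolding f_def using mpow_add_adj[OF detB, of "e j" "Suc (r j)"] by simp
  qed
  have "(\<lambda>j. f (r (Suc j)) ** adj2 (f (r j))) \<longlonglongrightarrow> l ** adj2 l"
  proof (rule tendsto_mmult)
    show "(\<lambda>j. f (r (Suc j))) \<longlonglongrightarrow> l" using LIMSEQ_Suc[OF lim] by (simp add: o_def)
    show "(\<lambda>j. adj2 (f (r j))) \<longlonglongrightarrow> adj2 l" using tendsto_adj2[OF lim] by (simp add: o_def)
  qed
  then have limh: "(\<lambda>j. mpow B (e j)) \<longlonglongrightarrow> mat 1" using he mult_adj2[OF detl] by simp
  have hm: "mpow B (e j - 1) = mpow B (e j) ** adj2 B" for j
  proof -
    have "mpow B ((e j - 1) + 1) ** adj2 (mpow B 1) = mpow B (e j - 1)" by (rule mpow_add_adj[OF detB])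
    moreover have "(e j - 1) + 1 = e j" using e1[of j] by simp
    ultimately show ?thesis by simp
  qed
  define W where "W j = A ** mpow B (e j - 1)" for j
  have WG: "W j \<in> ?G" for j
  proof (cases "e j - 1")
    case 0 then show ?thesis using A by (simp add: W_def)
  next
    case (Suc m) then show ?thesis using A mpow_in_sg'[OF B, of m] semigroup_gen.mult by (simp add: W_def)
  qed
  have "W \<longlonglongrightarrow> A ** (mat 1 ** adj2 B)" unfolding W_def hm
    by (intro tendsto_mmult tendsto_const limh)
  then have limW: "W \<longlonglongrightarrow> A ** adj2 B" by simp
  have "(\<lambda>j. mpow (W j) (Suc n)) \<longlonglongrightarrow> mpow (A ** adj2 B) (Suc n)" by (rule tendsto_mpow[OF limW])
  then have "(\<lambda>j. norm (mpow (W j) (Suc n))) \<longlonglongrightarrow> norm (mpow (A ** adj2 B) (Suc n))"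
    by (rule tendsto_norm)
  moreover have "norm (mpow (W j) (Suc n)) \<le> Bd" for j using bd mpow_in_sg'[OF WG] by blast
  ultimately show ?thesis by (intro LIMSEQ_le_const2[of "\<lambda>j. norm (mpow (W j) (Suc n))"]) auto
qed

definition Pm :: "complex \<Rightarrow> complex \<Rightarrow> complex \<Rightarrow> cmat2" where
  "Pm p q s = mat2 (1 + \<i> * s) (p * p * (\<i> * s)) (- (q * q * (\<i> * s))) (1 - \<i> * s)"

lemma Pm_mult: "p * q = 1 \<Longrightarrow> Pm p q s ** Pm p q t = Pm p q (s + t)"
proof -
  assume pq: "p * q = 1"
  have e1: "(1 + \<i> * s) * (1 + \<i> * t) + p * p * (\<i> * s) * - (q * q * (\<i> * t)) = 1 + \<i> * (s + t)"
  proof -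
    have "(1 + \<i> * s) * (1 + \<i> * t) + p * p * (\<i> * s) * - (q * q * (\<i> * t))
      = 1 + \<i> * (s + t) + s * t * ((p * q) * (p * q) - 1)" by (simp add: algebra_simps)
    then show ?thesis using pq by simp
  qed
  have e4: "- (q * q * (\<i> * s)) * (p * p * (\<i> * t)) + (1 - \<i> * s) * (1 - \<i> * t) = 1 - \<i> * (s + t)"
  proof -
    have "- (q * q * (\<i> * s)) * (p * p * (\<i> * t)) + (1 - \<i> * s) * (1 - \<i> * t)
      = 1 - \<i> * (s + t) + s * t * ((p * q) * (p * q) - 1)" by (simp add: algebra_simps)
    then show ?thesis using pq by simp
  qed
  have e2: "(1 + \<i> * s) * (p * p * (\<i> * t)) + p * p * (\<i> * s) * (1 - \<i> * t) = p * p * (\<i> * (s + t))"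
    by (simp add: algebra_simps)
  have e3: "- (q * q * (\<i> * s)) * (1 + \<i> * t) + (1 - \<i> * s) * - (q * q * (\<i> * t)) = - (q * q * (\<i> * (s + t)))"
    by (simp add: algebra_simps)
  show ?thesis by (simp only: Pm_def mat2_mult e1 e2 e3 e4)
qed

lemma mpow_Pm: "p * q = 1 \<Longrightarrow> mpow (Pm p q s) n = Pm p q (of_nat n * s)"
proof (induction n)
  case 0 then show ?case by (simp add: Pm_def mat2_one)
next
  case (Suc n) then show ?case by (simp add: Pm_mult algebra_simps)
qed

lemma T_adj_T:
  assumes pq: "p * q = 1"
  shows "mat2 (p*(1+\<i>*a)) (p*(\<i>*a)) (q*(-\<i>*a)) (q*(1-\<i>*a)) **
         adj2 (mat2 (p*(1+\<i>*b)) (p*(\<i>*b)) (q*(-\<i>*b)) (q*(1-\<i>*b))) = Pm p q (a - b)"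
proof -
  have e1: "p*(1+\<i>*a) * (q*(1-\<i>*b)) + p*(\<i>*a) * - (q*(-\<i>*b)) = 1 + \<i>*(a-b)"
  proof -
    have "p*(1+\<i>*a) * (q*(1-\<i>*b)) + p*(\<i>*a) * - (q*(-\<i>*b)) = (p * q) * (1 + \<i> * (a - b))"
      by (simp add: algebra_simps)
    then show ?thesis using pq by simp
  qed
  have e2: "p*(1+\<i>*a) * - (p*(\<i>*b)) + p*(\<i>*a) * (p*(1+\<i>*b)) = p*p*(\<i>*(a-b))"
    by (simp add: algebra_simps)
  have e3: "q*(-\<i>*a) * (q*(1-\<i>*b)) + q*(1-\<i>*a) * - (q*(-\<i>*b)) = - (q*q*(\<i>*(a-b)))"
    by (simp add: algebra_simps)
  have e4: "q*(-\<i>*a) * - (p*(\<i>*b)) + q*(1-\<i>*a) * (p*(1+\<i>*b)) = 1 - \<i>*(a-b)"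
  proof -
    have "q*(-\<i>*a) * - (p*(\<i>*b)) + q*(1-\<i>*a) * (p*(1+\<i>*b)) = (p * q) * (1 - \<i> * (a - b))"
      by (simp add: algebra_simps)
    then show ?thesis using pq by simp
  qed
  show ?thesis by (simp only: adj2_def mat2_nth Pm_def mat2_mult e1 e2 e3 e4)
qed

lemma supp_nonempty:
  fixes N :: "real measure"
  assumes "prob_space N" "sets N = sets borel"
  shows "meas_support N \<noteq> {}"
proof
  assume h: "meas_support N = {}"
  define F where "F = {U. open U \<and> emeasure N U = 0}"
  have "\<forall>x. \<exists>U. open U \<and> x \<in> U \<and> emeasure N U = 0"
    using h unfolding meas_support_def by (auto simp: not_less)
  then have UF: "\<Union>F = UNIV" unfolding F_def by blast
  obtain F' where F': "F' \<subseteq> F" "countable F'" "\<Union>F' = \<Union>F"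
    using Lindelof[of F] unfolding F_def by blast
  have "(\<Union>U\<in>F'. U) \<in> null_sets N"
  proof (rule null_sets_UN'[OF F'(2)])
    fix U assume "U \<in> F'"
    then have "open U" "emeasure N U = 0" using F'(1) unfolding F_def by auto
    then show "U \<in> null_sets N" using assms(2) by (auto intro: null_setsI)
  qed
  then have "emeasure N UNIV = 0" using F' UF by auto
  moreover have "space N = UNIV" using sets_eq_imp_space_eq[OF assms(2)] by simp
  ultimately show False using prob_space.emeasure_space_1[OF assms(1)] by simp
qed

lemma supp_transfer:
  fixes T :: "real \<Rightarrow> cmat2"
  assumes w: "w \<in> borel_measurable M" and T: "continuous_on UNIV T"
    and a: "a \<in> meas_support (distr M borel w)"
  shows "T a \<in> meas_support (distr M borel (\<lambda>\<sigma>. T (w \<sigma>)))"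
  unfolding meas_support_def
proof (intro CollectI allI impI)
  fix U assume U: "open U \<and> T a \<in> U"
  have Tm: "T \<in> borel_measurable borel" by (rule borel_measurable_continuous_onI[OF T])
  have Tw: "(\<lambda>\<sigma>. T (w \<sigma>)) \<in> borel_measurable M" using measurable_compose[OF w Tm] by (simp add: o_def)
  have oV: "open (T -` U)" using T U continuous_on_open_vimage[of UNIV T] by auto
  have "emeasure (distr M borel (\<lambda>\<sigma>. T (w \<sigma>))) U = emeasure M ((\<lambda>\<sigma>. T (w \<sigma>)) -` U \<inter> space M)"
    using U by (intro emeasure_distr[OF Tw]) auto
  also have "\<dots> = emeasure M (w -` (T -` U) \<inter> space M)" by (simp add: vimage_def)
  also have "\<dots> = emeasure (distr M borel w) (T -` U)"
    using oV by (intro emeasure_distr[OF w, symmetric]) auto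
  finally show "0 < emeasure (distr M borel (\<lambda>\<sigma>. T (w \<sigma>))) U"
    using a oV U unfolding meas_support_def by auto
qed

theorem proposition6:
  fixes M :: "'s measure" and w :: "'s \<Rightarrow> real" and E \<epsilon> \<delta> :: real
  assumes "prob_space M"
    and "w \<in> borel_measurable M"
    and "compact (meas_support (distr M borel w))"
    and "-2 < E" and "E < 2"
    and "\<delta> \<noteq> 0 \<or> (\<epsilon> \<noteq> 0 \<and> (\<exists>a b. a \<noteq> b \<and> a \<in> meas_support (distr M borel w)
                                        \<and> b \<in> meas_support (distr M borel w)))"
  shows "\<not> compact (closure (semigroup_gen
            (meas_support (distr M borel (\<lambda>\<sigma>. Tmat E \<epsilon> \<delta> (w \<sigma>))))))"
proof
  define S where "S = meas_support (distr M borel (\<lambda>\<sigma>. Tmat E \<epsilon> \<delta> (w \<sigma>)))"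
  assume "compact (closure (semigroup_gen
            (meas_support (distr M borel (\<lambda>\<sigma>. Tmat E \<epsilon> \<delta> (w \<sigma>))))))"
  then have cpt: "compact (closure (semigroup_gen S))" unfolding S_def .
  have "bounded (semigroup_gen S)"
    by (rule bounded_subset[OF compact_imp_bounded[OF cpt] closure_subset])
  then obtain Bd where bd: "\<And>X. X \<in> semigroup_gen S \<Longrightarrow> norm X \<le> Bd"
    unfolding bounded_iff by blast
  have inG: "Tmat E \<epsilon> \<delta> a \<in> semigroup_gen S" if "a \<in> meas_support (distr M borel w)" for a
    unfolding S_def by (rule semigroup_gen.base, rule supp_transfer[OF assms(2) continuous_Tmat that])
  show False
  proof (cases "\<delta> = 0")
    case False
    have "meas_support (distr M borel w) \<noteq> {}"
      by (rule supp_nonempty) (simp_all add: prob_space.prob_space_distr[OF assms(1)] assms(2))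
    then obtain a where a: "a \<in> meas_support (distr M borel w)" by blast
    show False
    proof (rule nonreal_unbounded[OF det2_Tmat])
      show "Im (tr2 (Tmat E \<epsilon> \<delta> a)) \<noteq> 0" using tr2_Tmat[OF assms(4,5)] False by simp
      show "norm (mpow (Tmat E \<epsilon> \<delta> a) (Suc n)) \<le> Bd" for n
        using bd mpow_in_sg'[OF inG[OF a]] by blast
    qed
  next
    case True
    then obtain a b where ab: "a \<noteq> b" "a \<in> meas_support (distr M borel w)"
      "b \<in> meas_support (distr M borel w)" and eps: "\<epsilon> \<noteq> 0" using assms(6) by blast
    define p where "p = exp (- \<i> * of_real (tk E))"
    define q where "q = exp (\<i> * of_real (tk E))"
    have pq: "p * q = 1" unfolding p_def q_def by (rule pq)
    define d where "d = tc E \<epsilon> \<delta> a - tc E \<epsilon> \<delta> b"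
    have AB: "Tmat E \<epsilon> \<delta> a ** adj2 (Tmat E \<epsilon> \<delta> b) = Pm p q d"
      unfolding Tmat_eq p_def[symmetric] q_def[symmetric] d_def by (rule T_adj_T[OF pq])
    have bdP: "norm (mpow (Pm p q d) (Suc n)) \<le> Bd" for n
      using compact_power_inverse[OF cpt bd inG[OF ab(2)] inG[OF ab(3)] det2_Tmat] by (simp only: AB)
    have np: "norm p = 1" unfolding p_def by simp
    have sk: "sin (tk E) > 0" using sin_tk[OF assms(4,5)] by simp
    have dd: "d = of_real (\<epsilon> * (a - b) / (2 * sin (tk E)))"
      unfolding d_def tc_def True using sk by (simp add: field_simps)
    have "\<epsilon> * (a - b) / (2 * sin (tk E)) \<noteq> 0" using eps ab(1) sk by simp
    then have dpos: "norm d > 0" unfolding dd by simp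
    have "real (Suc n) * norm d \<le> Bd" for n
    proof -
      have e: "mpow (Pm p q d) (Suc n) $ 1 $ 2 = p * p * (\<i> * (of_nat (Suc n) * d))"
        unfolding mpow_Pm[OF pq] by (simp only: Pm_def mat2_nth)
      have "norm (mpow (Pm p q d) (Suc n) $ 1 $ 2) = real (Suc n) * norm d"
        unfolding e using np by (simp add: norm_mult del: of_nat_Suc)
      then show ?thesis using norm_entry[of "mpow (Pm p q d) (Suc n)" 1 2] bdP[of n] by linarith
    qed
    moreover obtain n where "Bd < real n * norm d" using ex_less_of_nat_mult[OF dpos] by blast
    moreover have "real n * norm d \<le> real (Suc n) * norm d" using dpos by simp
    ultimately show False by (meson not_le order_trans)
  qed
qed



end
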